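(* Let $G=(V,E,L)$ be a graph with loops, $V=[n]$, $L=L^-\cup L^+$ with $L^+\neq\emptyset$. Let $\{i,i\}\in L^+$, let $M\subseteq N(i)$ with $i\in M$, $d:=|M|$. Let $S^i_M$ be the set of $(x,Y)$, $x\in\mathbb{R}^n$, $Y$ symmetric $n\times n$, for which there exist auxiliary values $z_S$ ($S\subseteq M$, $|S|\ge3$) such that, with $z_k:=x_k$ for $k\in M$, $z_{\{k,l\}}:=Y_{kl}$ for distinct $k,l\in M$, $z_{ii}:=Y_{ii}$, $z_\emptyset:=1$, $$z_{ii}\ \ge\sum_{J\subseteq M:\, i\in J}\frac{\big(\ell_d(J,M\setminus J)\big)^2}{\ell_{d-1}(J\setminus\{i\},M\setminus J)},\qquad \ell_d(J,M\setminus J)\ge 0\quad\forall J\subseteq M.$$ Then: (i) if $|M|=2$, then $\mathcal{C}^{\rm SDP+MC}_n\subseteq S^i_M$; (ii) if $|M|>2$, then $\mathcal{C}^{\rm SDP+MC+Tri}_n\not\subseteq S^i_M$.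
   Context: A graph with loops is $G=(V,E,L)$: $V$ finite node set, $E$ a set of unordered pairs of distinct nodes, $L$ a set of loops $\{i,i\}$ partitioned as $L=L^-\cup L^+$ (minus/plus loops). $N(i):=\{j\in V:\{i,j\}\in E\cup L\}$ (so $i\in N(i)$ for a loop $\{i,i\}$). For disjoint $J_1,J_2$ with $|J_1\cup J_2|=d$, $\ell_d(J_1,J_2):=\sum_{t\subseteq J_2}(-1)^{|t|}z_{J_1\cup t}$, where $z_{\{k\}}=z_k$. Each $u^2/v$ denotes the closed perspective: $u^2/v$ if $v>0$, $0$ if $u=v=0$, $+\infty$ if $u\neq0,v=0$. $\mathcal{C}^{\rm SDP}_n$ is the set of $(x,Y)$, $x\in[0,1]^n$, $Y$ symmetric $n\times n$, with $\begin{bmatrix}1&x^\top\\ x&Y\end{bmatrix}\succeq0$ and $Y_{kk}\le x_k$ for all $k$. $\mathcal{C}^{\rm SDP+MC}_n$ adds, for all $1\le k<l\le n$, the McCormick inequalities $Y_{kl}\ge0$, $Y_{kl}\ge x_k+x_l-1$, $Y_{kl}\le x_k$, $Y_{kl}\le x_l$. $\mathcal{C}^{\rm SDP+MC+Tri}_n$ further adds, for all $1\le k<l<m\le n$, the triangle inequalities $Y_{kl}+Y_{km}\le x_k+Y_{lm}$, $Y_{kl}+Y_{lm}\le x_l+Y_{km}$, $Y_{km}+Y_{lm}\le x_m+Y_{kl}$, $x_k+x_l+x_m-Y_{kl}-Y_{km}-Y_{lm}\le1$. *)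

theory Defs
  imports Main "HOL-Library.Extended_Real"
begin

definition graph_with_loops ::
  "nat \<Rightarrow> nat set set \<Rightarrow> nat set set \<Rightarrow> nat set set \<Rightarrow> bool" where
  "graph_with_loops n E Lm Lp \<longleftrightarrow>
     E \<subseteq> {{a, b} | a b. a \<in> {1..n} \<and> b \<in> {1..n} \<and> a \<noteq> b} \<and>
     Lm \<subseteq> {{a, a} | a. a \<in> {1..n}} \<and>
     Lp \<subseteq> {{a, a} | a. a \<in> {1..n}} \<and>
     Lm \<inter> Lp = {}"

definition nbhd :: "nat \<Rightarrow> nat set set \<Rightarrow> nat set set \<Rightarrow> nat set set \<Rightarrow> nat \<Rightarrow> nat set" where
  "nbhd n E Lm Lp i = {j \<in> {1..n}. {i, j} \<in> E \<union> (Lm \<union> Lp)}"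

text \<open>Positive semidefiniteness of the (n+1)x(n+1) block matrix [[1, x^T],[x, Y]],
  rows/columns indexed by 0..n (index 0 for the leading entry).\<close>
definition block_matrix :: "(nat \<Rightarrow> real) \<Rightarrow> (nat \<Rightarrow> nat \<Rightarrow> real) \<Rightarrow> nat \<Rightarrow> nat \<Rightarrow> real" where
  "block_matrix x Y a b =
     (if a = 0 \<and> b = 0 then 1 else if a = 0 then x b else if b = 0 then x a else Y a b)"

definition psd_mat :: "nat \<Rightarrow> (nat \<Rightarrow> nat \<Rightarrow> real) \<Rightarrow> bool" where
  "psd_mat m A \<longleftrightarrow> (\<forall>a\<in>{0..m}. \<forall>b\<in>{0..m}. A a b = A b a) \<and>
     (\<forall>v :: nat \<Rightarrow> real. (\<Sum>a\<in>{0..m}. \<Sum>b\<in>{0..m}. v a * A a b * v b) \<ge> 0)"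

definition sym_on :: "nat \<Rightarrow> (nat \<Rightarrow> nat \<Rightarrow> real) \<Rightarrow> bool" where
  "sym_on n Y \<longleftrightarrow> (\<forall>k\<in>{1..n}. \<forall>l\<in>{1..n}. Y k l = Y l k)"

definition C_SDP :: "nat \<Rightarrow> ((nat \<Rightarrow> real) \<times> (nat \<Rightarrow> nat \<Rightarrow> real)) set" where
  "C_SDP n = {(x, Y). (\<forall>k\<in>{1..n}. 0 \<le> x k \<and> x k \<le> 1) \<and> sym_on n Y \<and>
      psd_mat n (block_matrix x Y) \<and> (\<forall>k\<in>{1..n}. Y k k \<le> x k)}"

definition C_SDP_MC :: "nat \<Rightarrow> ((nat \<Rightarrow> real) \<times> (nat \<Rightarrow> nat \<Rightarrow> real)) set" where
  "C_SDP_MC n = {(x, Y). (x, Y) \<in> C_SDP n \<and>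
      (\<forall>k\<in>{1..n}. \<forall>l\<in>{1..n}. k < l \<longrightarrow>
         Y k l \<ge> 0 \<and> Y k l \<ge> x k + x l - 1 \<and> Y k l \<le> x k \<and> Y k l \<le> x l)}"

definition C_SDP_MC_Tri :: "nat \<Rightarrow> ((nat \<Rightarrow> real) \<times> (nat \<Rightarrow> nat \<Rightarrow> real)) set" where
  "C_SDP_MC_Tri n = {(x, Y). (x, Y) \<in> C_SDP_MC n \<and>
      (\<forall>k\<in>{1..n}. \<forall>l\<in>{1..n}. \<forall>m\<in>{1..n}. k < l \<and> l < m \<longrightarrow>
         Y k l + Y k m \<le> x k + Y l m \<and>
         Y k l + Y l m \<le> x l + Y k m \<and>
         Y k m + Y l m \<le> x m + Y k l \<and>
         x k + x l + x m - Y k l - Y k m - Y l m \<le> 1)}"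

definition zvar :: "(nat \<Rightarrow> real) \<Rightarrow> (nat \<Rightarrow> nat \<Rightarrow> real) \<Rightarrow> (nat set \<Rightarrow> real) \<Rightarrow> nat set \<Rightarrow> real" where
  "zvar x Y w S = (if S = {} then 1 else if card S = 1 then x (the_elem S)
                   else if card S = 2 then Y (Min S) (Max S) else w S)"

definition ell :: "(nat set \<Rightarrow> real) \<Rightarrow> nat set \<Rightarrow> nat set \<Rightarrow> real" where
  "ell z J1 J2 = (\<Sum>t\<in>Pow J2. (-1) ^ card t * z (J1 \<union> t))"

text \<open>Closed perspective u^2/v (value +infinity when it is not finite).\<close>
definition persp :: "real \<Rightarrow> real \<Rightarrow> ereal" where
  "persp u v = (if v > 0 then ereal (u\<^sup>2 / v) else if u = 0 \<and> v = 0 then 0 else \<infinity>)"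

definition S_set :: "nat \<Rightarrow> nat \<Rightarrow> nat set \<Rightarrow> ((nat \<Rightarrow> real) \<times> (nat \<Rightarrow> nat \<Rightarrow> real)) set" where
  "S_set n i M = {(x, Y). sym_on n Y \<and>
     (\<exists>w :: nat set \<Rightarrow> real.
        ereal (Y i i) \<ge> (\<Sum>J\<in>{J. J \<subseteq> M \<and> i \<in> J}.
            persp (ell (zvar x Y w) J (M - J)) (ell (zvar x Y w) (J - {i}) (M - J))) \<and>
        (\<forall>J. J \<subseteq> M \<longrightarrow> ell (zvar x Y w) J (M - J) \<ge> 0))}"

end

theory Submission
  imports Defs
begin


lemma ell_empty[simp]: "ell z J {} = z J"
  by (simp add: ell_def)

lemma inj_insert_Pow: "e \<notin> K \<Longrightarrow> inj_on (insert e) (Pow K)"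
proof (rule inj_onI)
  fix s t assume e: "e \<notin> K" and st: "s \<in> Pow K" "t \<in> Pow K" "insert e s = insert e t"
  then have "e \<notin> s" "e \<notin> t" by auto
  moreover have "insert e s - {e} = insert e t - {e}" using st by simp
  ultimately show "s = t" by simp
qed

lemma ell_insert:
  assumes "finite K" "e \<notin> K"
  shows "ell z J (insert e K) = ell z J K - ell z (insert e J) K"
proof -
  have inj: "inj_on (insert e) (Pow K)" using assms(2) by (rule inj_insert_Pow)
  have disj: "Pow K \<inter> insert e ` Pow K = {}" using assms(2) by auto
  have "ell z J (insert e K) = (\<Sum>t\<in>Pow K. (-1) ^ card t * z (J \<union> t))
      + (\<Sum>t\<in>insert e ` Pow K. (-1) ^ card t * z (J \<union> t))"
    unfolding ell_def Pow_insert using assms disj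
    by (simp add: sum.union_disjoint)
  also have "(\<Sum>t\<in>insert e ` Pow K. (-1) ^ card t * z (J \<union> t))
      = (\<Sum>t\<in>Pow K. (-1) ^ card (insert e t) * z (J \<union> insert e t))"
    using inj by (simp add: sum.reindex)
  also have "\<dots> = (\<Sum>t\<in>Pow K. - ((-1) ^ card t * z (insert e J \<union> t)))"
  proof (rule sum.cong)
    fix t assume "t \<in> Pow K"
    then have "finite t" "e \<notin> t" using assms finite_subset by auto
    then show "(-1) ^ card (insert e t) * z (J \<union> insert e t) = - ((-1) ^ card t * z (insert e J \<union> t))"
      by simp
  qed simp
  finally show ?thesis unfolding ell_def by (simp add: sum_negf)
qed

lemma marg:
  assumes "finite R" "R \<inter> B = {}" "R \<inter> K = {}" "finite K"
  shows "(\<Sum>U\<in>Pow R. ell z (B \<union> U) (K \<union> (R - U))) = ell z B K"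
  using assms
proof (induction R rule: finite_induct)
  case empty
  then show ?case by simp
next
  case (insert e R)
  have inj: "inj_on (insert e) (Pow R)" using insert(2) by (rule inj_insert_Pow)
  have disj: "Pow R \<inter> insert e ` Pow R = {}" using insert(2) by auto
  have "(\<Sum>U\<in>Pow (insert e R). ell z (B \<union> U) (K \<union> (insert e R - U)))
     = (\<Sum>U\<in>Pow R. ell z (B \<union> U) (K \<union> (insert e R - U)))
       + (\<Sum>U\<in>insert e ` Pow R. ell z (B \<union> U) (K \<union> (insert e R - U)))"
    unfolding Pow_insert using insert disj by (simp add: sum.union_disjoint)
  also have "(\<Sum>U\<in>insert e ` Pow R. ell z (B \<union> U) (K \<union> (insert e R - U)))
     = (\<Sum>U\<in>Pow R. ell z (B \<union> insert e U) (K \<union> (insert e R - insert e U)))"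
    using inj by (simp add: sum.reindex)
  also have "(\<Sum>U\<in>Pow R. ell z (B \<union> U) (K \<union> (insert e R - U))) + \<dots>
     = (\<Sum>U\<in>Pow R. ell z (B \<union> U) (K \<union> (R - U)))"
    unfolding sum.distrib[symmetric]
  proof (rule sum.cong)
    fix U assume U: "U \<in> Pow R"
    have f: "finite (K \<union> (R - U))" using insert by auto
    have ne: "e \<notin> K \<union> (R - U)" using insert by auto
    have 1: "K \<union> (insert e R - U) = insert e (K \<union> (R - U))" using U insert by auto
    have 2: "K \<union> (insert e R - insert e U) = K \<union> (R - U)" using U insert by auto
    have 3: "B \<union> insert e U = insert e (B \<union> U)" by auto
    show "ell z (B \<union> U) (K \<union> (insert e R - U)) + ell z (B \<union> insert e U) (K \<union> (insert e R - insert e U))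
        = ell z (B \<union> U) (K \<union> (R - U))"
      unfolding 1 2 3 using ell_insert[OF f ne] by simp
  qed simp
  also have "\<dots> = ell z B K" using insert by auto
  finally show ?case .
qed

lemma persp_lb: "persp u v \<ge> ereal (2 * u - v)"
proof (cases "v > 0")
  case True
  have e: "u\<^sup>2 - (2 * u - v) * v = (u - v)\<^sup>2" by (simp add: power2_eq_square algebra_simps)
  have "0 \<le> (u - v)\<^sup>2" by simp
  then have "(2 * u - v) * v \<le> u\<^sup>2" using e by linarith
  then have "2 * u - v \<le> u\<^sup>2 / v" using True by (simp add: pos_le_divide_eq)
  then show ?thesis using True by (simp add: persp_def)
qed (auto simp: persp_def)

lemma persp_nn: "persp u v \<ge> 0"
  by (auto simp: persp_def)

lemma dsum_reduce:
  fixes n :: nat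
  assumes S: "S \<subseteq> {0..n}" and z: "\<And>a b. a \<notin> S \<or> b \<notin> S \<Longrightarrow> f a b = (0::real)"
  shows "(\<Sum>a\<in>{0..n}. \<Sum>b\<in>{0..n}. f a b) = (\<Sum>a\<in>S. \<Sum>b\<in>S. f a b)"
proof -
  have inner: "(\<Sum>b\<in>{0..n}. f a b) = (\<Sum>b\<in>S. f a b)" for a
  proof (rule sum.mono_neutral_right)
    show "\<forall>b\<in>{0..n} - S. f a b = 0" using z by blast
  qed (use S in auto)
  have "(\<Sum>a\<in>{0..n}. \<Sum>b\<in>{0..n}. f a b) = (\<Sum>a\<in>{0..n}. \<Sum>b\<in>S. f a b)"
    using inner by simp
  also have "\<dots> = (\<Sum>a\<in>S. \<Sum>b\<in>S. f a b)"
  proof (rule sum.mono_neutral_right)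
    show "\<forall>a\<in>{0..n} - S. (\<Sum>b\<in>S. f a b) = 0" using z by simp
  qed (use S in auto)
  finally show ?thesis .
qed



lemma zvar_1[simp]: "zvar x Y w {a} = x a" by (simp add: zvar_def)
lemma zvar_0[simp]: "zvar x Y w {} = 1" by (simp add: zvar_def)
lemma zvar_2: "a \<noteq> b \<Longrightarrow> Y a b = Y b a \<Longrightarrow> zvar x Y w {a, b} = Y a b"
  by (cases "a < b") (auto simp: zvar_def min_def max_def)
lemma zvar_3: "a \<noteq> b \<Longrightarrow> a \<noteq> c \<Longrightarrow> b \<noteq> c \<Longrightarrow> zvar x Y w {a, b, c} = w {a, b, c}"
  by (simp add: zvar_def)

lemma part1:
  assumes xy: "(x, Y) \<in> C_SDP_MC n" and ij: "i \<in> {1..n}" "j \<in> {1..n}" "i \<noteq> j"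
  shows "(x, Y) \<in> S_set n i {i, j}"
proof -
  have sym: "sym_on n Y" and psd: "psd_mat n (block_matrix x Y)"
    and xb: "\<forall>k\<in>{1..n}. 0 \<le> x k \<and> x k \<le> 1" and dg: "\<forall>k\<in>{1..n}. Y k k \<le> x k"
    and mc: "\<forall>k\<in>{1..n}. \<forall>l\<in>{1..n}. k < l \<longrightarrow>
         Y k l \<ge> 0 \<and> Y k l \<ge> x k + x l - 1 \<and> Y k l \<le> x k \<and> Y k l \<le> x l"
    using xy by (auto simp: C_SDP_MC_def C_SDP_def)
  define a where "a = x i"
  define b where "b = x j"
  define c where "c = Y i i"
  define y where "y = Y i j"
  have yji: "Y j i = y" using sym ij unfolding sym_on_def y_def by auto
  have mcy: "0 \<le> y" "a + b - 1 \<le> y" "y \<le> a" "y \<le> b"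
  proof -
    have "0 \<le> y \<and> a + b - 1 \<le> y \<and> y \<le> a \<and> y \<le> b"
    proof (cases "i < j")
      case True then show ?thesis using mc ij unfolding a_def b_def y_def by auto
    next
      case False then have "j < i" using ij by auto
      then show ?thesis using mc ij yji unfolding a_def b_def y_def by force
    qed
    then show "0 \<le> y" "a + b - 1 \<le> y" "y \<le> a" "y \<le> b" by auto
  qed
  have b01: "0 \<le> b" "b \<le> 1" using xb ij unfolding b_def by auto
  have yjj: "Y j j \<le> b" using dg ij unfolding b_def by auto
  have form: "0 \<le> \<alpha>\<^sup>2 + c + \<beta>\<^sup>2 * b + 2*\<alpha>*a + 2*\<alpha>*\<beta>*b + 2*\<beta>*y" for \<alpha> \<beta>
  proof -
    define v where "v = (\<lambda>p::nat. if p = 0 then \<alpha> else if p = i then 1 else if p = j then \<beta> else 0)"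
    have "0 \<le> (\<Sum>p\<in>{0..n}. \<Sum>q\<in>{0..n}. v p * block_matrix x Y p q * v q)"
      using psd unfolding psd_mat_def by blast
    also have "\<dots> = (\<Sum>p\<in>{0,i,j}. \<Sum>q\<in>{0,i,j}. v p * block_matrix x Y p q * v q)"
      by (rule dsum_reduce) (use ij in \<open>auto simp: v_def\<close>)
    also have "\<dots> = \<alpha>\<^sup>2 + c + \<beta>\<^sup>2 * Y j j + 2*\<alpha>*a + 2*\<alpha>*\<beta>*b + 2*\<beta>*y"
      using ij yji by (simp add: v_def block_matrix_def a_def b_def c_def y_def power2_eq_square algebra_simps)
    finally have "0 \<le> \<alpha>\<^sup>2 + c + \<beta>\<^sup>2 * Y j j + 2*\<alpha>*a + 2*\<alpha>*\<beta>*b + 2*\<beta>*y" .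
    moreover have "\<beta>\<^sup>2 * Y j j \<le> \<beta>\<^sup>2 * b" using yjj by (simp add: mult_left_mono)
    ultimately show ?thesis by linarith
  qed
  have ca: "a\<^sup>2 \<le> c" using form[of "-a" 0] by (simp add: power2_eq_square)
  define z where "z = zvar x Y (\<lambda>_. 0)"
  have z1: "z {i} = a" "z {j} = b" "z {i, j} = y" "z {j, i} = y" "z {} = 1"
    using zvar_2[of i j Y] zvar_2[of j i Y] ij yji unfolding z_def a_def b_def y_def by auto
  have e1: "ell z {i, j} {} = y" "ell z {j} {} = b" "ell z {i} {j} = a - y" "ell z {} {j} = 1 - b"
    "ell z {j} {i} = b - y" "ell z {} {i, j} = 1 - b - (a - y)"
    using z1 ell_insert[of "{}" j z "{i}"] ell_insert[of "{}" j z "{}"] ell_insert[of "{}" i z "{j}"]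
      ell_insert[of "{j}" i z "{}"] ij by (auto simp: insert_commute)
  have Jset: "{J. J \<subseteq> {i, j} \<and> i \<in> J} = {{i}, {i, j}}" by auto
  have sumeq: "(\<Sum>J\<in>{J. J \<subseteq> {i, j} \<and> i \<in> J}. persp (ell z J ({i, j} - J)) (ell z (J - {i}) ({i, j} - J)))
     = persp (a - y) (1 - b) + persp y b"
    unfolding Jset using ij e1 by (simp add: insert_Diff_if)
  have ineq: "persp (a - y) (1 - b) + persp y b \<le> ereal c"
  proof (cases "b = 0")
    case True then have "y = 0" using mcy by auto
    then show ?thesis using True ca by (simp add: persp_def)
  next
    case False
    show ?thesis
    proof (cases "b = 1")
      case True then have "y = a" using mcy by auto
      then show ?thesis using True ca by (simp add: persp_def)
    next
      case False2: False
      then have bb: "0 < b" "b < 1" using False b01 by auto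
      define P where "P = y / b"
      define Q where "Q = (a - y) / (1 - b)"
      have nz: "1 - b \<noteq> 0" "b \<noteq> 0" using bb by auto
      have yP: "y = P * b" unfolding P_def using nz by simp
      have aQ: "a = P * b + Q * (1 - b)" unfolding Q_def using nz yP by simp
      have f: "0 \<le> (-Q)\<^sup>2 + c + (Q - P)\<^sup>2 * b + 2*(-Q)*a + 2*(-Q)*(Q - P)*b + 2*(Q - P)*y"
        by (rule form)
      have "(-Q)\<^sup>2 + (Q - P)\<^sup>2 * b + 2*(-Q)*a + 2*(-Q)*(Q - P)*b + 2*(Q - P)*y
          = - (P\<^sup>2 * b + Q\<^sup>2 * (1 - b))"
        unfolding aQ yP by (simp add: power2_eq_square algebra_simps)
      moreover have "y\<^sup>2 / b = P\<^sup>2 * b" unfolding yP using nz by (simp add: power2_eq_square)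
      moreover have "(a - y)\<^sup>2 / (1 - b) = Q\<^sup>2 * (1 - b)" unfolding Q_def using nz
        by (simp add: power2_eq_square)
      ultimately have "y\<^sup>2 / b + (a - y)\<^sup>2 / (1 - b) \<le> c" using f by linarith
      then show ?thesis using bb by (simp add: persp_def)
    qed
  qed
  have nn: "\<forall>J. J \<subseteq> {i, j} \<longrightarrow> ell z J ({i, j} - J) \<ge> 0"
  proof (intro allI impI)
    fix J assume "J \<subseteq> {i, j}"
    then have "J = {} \<or> J = {i} \<or> J = {j} \<or> J = {i, j}" by blast
    then show "ell z J ({i, j} - J) \<ge> 0" using e1 mcy ij by (auto simp: insert_Diff_if)
  qed
  have "\<exists>w. ereal (Y i i) \<ge> (\<Sum>J\<in>{J. J \<subseteq> {i, j} \<and> i \<in> J}.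
            persp (ell (zvar x Y w) J ({i, j} - J)) (ell (zvar x Y w) (J - {i}) ({i, j} - J))) \<and>
        (\<forall>J. J \<subseteq> {i, j} \<longrightarrow> ell (zvar x Y w) J ({i, j} - J) \<ge> 0)"
    apply (rule exI[of _ "\<lambda>_. 0"])
    unfolding z_def[symmetric] c_def[symmetric]
    apply (rule conjI)
     apply (subst sumeq) apply (rule ineq)
    by (rule nn)
  then show ?thesis unfolding S_set_def mem_Collect_eq prod.case using sym by blast
qed



lemma part2:
  assumes ijk: "i \<in> {1..n}" "j \<in> {1..n}" "k \<in> {1..n}" "i \<noteq> j" "i \<noteq> k" "j \<noteq> k"
    and M: "M \<subseteq> {1..n}" "i \<in> M" "j \<in> M" "k \<in> M"
  shows "\<not> (C_SDP_MC_Tri n \<subseteq> S_set n i M)"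
proof
  define x where "x = (\<lambda>a::nat. if a = i then 1/4 else if a = j \<or> a = k then 1/2 else (0::real))"
  define Y where "Y = (\<lambda>a b::nat. if a = b then (if a = i then 1/5 else x a)
      else if (a = j \<and> b = k) \<or> (a = k \<and> b = j) then 1/4 else (0::real))"
  assume sub: "C_SDP_MC_Tri n \<subseteq> S_set n i M"
  have symY: "Y a b = Y b a" for a b unfolding Y_def by auto
  have psd: "psd_mat n (block_matrix x Y)"
    unfolding psd_mat_def
  proof (intro conjI ballI allI)
    fix a b assume "a \<in> {0..n}" "b \<in> {0..n}"
    show "block_matrix x Y a b = block_matrix x Y b a" using symY by (simp add: block_matrix_def)
  next
    fix v :: "nat \<Rightarrow> real"
    have "(\<Sum>a\<in>{0..n}. \<Sum>b\<in>{0..n}. v a * block_matrix x Y a b * v b)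
        = (\<Sum>a\<in>{0,i,j,k}. \<Sum>b\<in>{0,i,j,k}. v a * block_matrix x Y a b * v b)"
      by (rule dsum_reduce) (use ijk in \<open>auto simp: block_matrix_def x_def Y_def\<close>)
    also have "\<dots> = (v 0 + v i / 4 + v j / 2 + v k / 2)\<^sup>2 + (v j - v i / 2)\<^sup>2 / 4
        + (v k - v i / 2)\<^sup>2 / 4 + (v i)\<^sup>2 / 80"
      using ijk by (simp add: block_matrix_def x_def Y_def power2_eq_square algebra_simps) (simp add: field_simps)
    also have "\<dots> \<ge> 0" by simp
    finally show "0 \<le> (\<Sum>a\<in>{0..n}. \<Sum>b\<in>{0..n}. v a * block_matrix x Y a b * v b)" .
  qed
  have inC: "(x, Y) \<in> C_SDP_MC_Tri n"
    unfolding C_SDP_MC_Tri_def C_SDP_MC_def C_SDP_def mem_Collect_eq prod.case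
  proof (intro conjI)
    show "\<forall>k\<in>{1..n}. 0 \<le> x k \<and> x k \<le> 1" by (simp add: x_def)
    show "sym_on n Y" using symY by (simp add: sym_on_def)
    show "psd_mat n (block_matrix x Y)" by (rule psd)
    show "\<forall>k\<in>{1..n}. Y k k \<le> x k" by (simp add: Y_def x_def)
    show "\<forall>k\<in>{1..n}. \<forall>l\<in>{1..n}. k < l \<longrightarrow>
         Y k l \<ge> 0 \<and> Y k l \<ge> x k + x l - 1 \<and> Y k l \<le> x k \<and> Y k l \<le> x l"
      using ijk by (auto simp: Y_def x_def)
    show "\<forall>ka\<in>{1..n}. \<forall>l\<in>{1..n}. \<forall>m\<in>{1..n}. ka < l \<and> l < m \<longrightarrow>
         Y ka l + Y ka m \<le> x ka + Y l m \<and>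
         Y ka l + Y l m \<le> x l + Y ka m \<and>
         Y ka m + Y l m \<le> x m + Y ka l \<and>
         x ka + x l + x m - Y ka l - Y ka m - Y l m \<le> 1"
      using ijk by (auto simp: Y_def x_def)
  qed
  then have "(x, Y) \<in> S_set n i M" using sub by blast
  then obtain w where ineq: "ereal (Y i i) \<ge> (\<Sum>J\<in>{J. J \<subseteq> M \<and> i \<in> J}.
            persp (ell (zvar x Y w) J (M - J)) (ell (zvar x Y w) (J - {i}) (M - J)))"
      and nn: "\<forall>J. J \<subseteq> M \<longrightarrow> ell (zvar x Y w) J (M - J) \<ge> 0"
    unfolding S_set_def by blast
  define z where "z = zvar x Y w"
  define R where "R = M - {k, j, i}"
  have finM: "finite M" using M(1) finite_subset by blast
  have finR: "finite R" unfolding R_def using finM by simp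
  have "(\<Sum>U\<in>Pow R. ell z ({k, j, i} \<union> U) ({} \<union> (R - U))) = ell z {k, j, i} {}"
    by (rule marg) (use finR in \<open>auto simp: R_def\<close>)
  moreover have "(\<Sum>U\<in>Pow R. ell z ({k, j, i} \<union> U) ({} \<union> (R - U))) \<ge> 0"
  proof (rule sum_nonneg)
    fix U assume U: "U \<in> Pow R"
    have "{k, j, i} \<union> U \<subseteq> M" using U M unfolding R_def by auto
    moreover have "M - ({k, j, i} \<union> U) = {} \<union> (R - U)" unfolding R_def by auto
    ultimately show "ell z ({k, j, i} \<union> U) ({} \<union> (R - U)) \<ge> 0" using nn unfolding z_def by metis
  qed
  ultimately have t0: "w {k, j, i} \<ge> 0" unfolding z_def using ijk by (simp add: zvar_3)
  have m1: "(\<Sum>U\<in>Pow R. ell z ({i} \<union> U) ({j, k} \<union> (R - U))) = ell z {i} {j, k}"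
    by (rule marg) (use finR in \<open>auto simp: R_def\<close>)
  have m2: "(\<Sum>U\<in>Pow R. ell z ({} \<union> U) ({j, k} \<union> (R - U))) = ell z {} {j, k}"
    by (rule marg) (use finR in \<open>auto simp: R_def\<close>)
  have iR: "i \<notin> R" unfolding R_def by auto
  have "ereal (2 * ell z {i} {j, k} - ell z {} {j, k})
      = ereal (\<Sum>U\<in>Pow R. 2 * ell z (insert i U) (M - insert i U) - ell z (insert i U - {i}) (M - insert i U))"
  proof -
    have "(\<Sum>U\<in>Pow R. 2 * ell z (insert i U) (M - insert i U) - ell z (insert i U - {i}) (M - insert i U))
       = (\<Sum>U\<in>Pow R. 2 * ell z ({i} \<union> U) ({j, k} \<union> (R - U)) - ell z ({} \<union> U) ({j, k} \<union> (R - U)))"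
    proof (rule sum.cong[OF refl])
      fix U assume U: "U \<in> Pow R"
      have 1: "M - insert i U = {j, k} \<union> (R - U)" using U M ijk unfolding R_def by auto
      have 2: "insert i U - {i} = {} \<union> U" using U iR by auto
      show "2 * ell z (insert i U) (M - insert i U) - ell z (insert i U - {i}) (M - insert i U)
         = 2 * ell z ({i} \<union> U) ({j, k} \<union> (R - U)) - ell z ({} \<union> U) ({j, k} \<union> (R - U))"
        unfolding 1 2 by simp
    qed
    also have "\<dots> = 2 * ell z {i} {j, k} - ell z {} {j, k}"
      using m1 m2 by (simp add: sum_subtractf sum_distrib_left[symmetric])
    finally show ?thesis by simp
  qed
  also have "\<dots> = (\<Sum>U\<in>Pow R. ereal (2 * ell z (insert i U) (M - insert i U) - ell z (insert i U - {i}) (M - insert i U)))"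
    by simp
  also have "\<dots> \<le> (\<Sum>U\<in>Pow R. persp (ell z (insert i U) (M - insert i U)) (ell z (insert i U - {i}) (M - insert i U)))"
    by (rule sum_mono) (rule persp_lb)
  also have "\<dots> = (\<Sum>J\<in>insert i ` Pow R. persp (ell z J (M - J)) (ell z (J - {i}) (M - J)))"
    using inj_insert_Pow[OF iR] by (simp add: sum.reindex)
  also have "\<dots> \<le> (\<Sum>J\<in>{J. J \<subseteq> M \<and> i \<in> J}. persp (ell z J (M - J)) (ell z (J - {i}) (M - J)))"
  proof (rule sum_mono2)
    show "finite {J. J \<subseteq> M \<and> i \<in> J}" using finM by simp
    show "insert i ` Pow R \<subseteq> {J. J \<subseteq> M \<and> i \<in> J}" using M unfolding R_def by auto
  qed (rule persp_nn)
  also have "\<dots> \<le> ereal (Y i i)" using ineq unfolding z_def .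
  finally have bound: "2 * ell z {i} {j, k} - ell z {} {j, k} \<le> Y i i" by simp
  have zz: "z {k, i} = 0" "z {j, i} = 0" "z {k, j} = 1/4" "z {k, j, i} = w {k, j, i}"
    "z {i} = 1/4" "z {j} = 1/2" "z {k} = 1/2" "z {} = 1"
    unfolding z_def using ijk zvar_2[of k i Y x w] zvar_2[of j i Y x w] zvar_2[of k j Y x w]
      zvar_3[of k j i x Y w] symY by (auto simp: Y_def x_def)
  have "ell z {i} {j, k} = 1/4 + w {k, j, i}"
    using ell_insert[of "{k}" j z "{i}"] ell_insert[of "{}" k z "{i}"] ell_insert[of "{}" k z "{j, i}"]
      ijk zz by simp
  moreover have "ell z {} {j, k} = 1/4"
    using ell_insert[of "{k}" j z "{}"] ell_insert[of "{}" k z "{}"] ell_insert[of "{}" k z "{j}"]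
      ijk zz by simp
  ultimately show False using bound t0 unfolding Y_def by simp
qed


theorem proposition7:
  fixes n i :: nat and E Lm Lp :: "nat set set" and M :: "nat set"
  assumes "graph_with_loops n E Lm Lp"
    and "Lp \<noteq> {}"
    and "{i, i} \<in> Lp"
    and "M \<subseteq> nbhd n E Lm Lp i"
    and "i \<in> M"
  shows "(card M = 2 \<longrightarrow> C_SDP_MC n \<subseteq> S_set n i M) \<and>
         (card M > 2 \<longrightarrow> \<not> (C_SDP_MC_Tri n \<subseteq> S_set n i M))"
proof -
  have MV: "M \<subseteq> {1..n}" using assms(4) unfolding nbhd_def by auto
  have finM: "finite M" using MV finite_subset by blast
  have iV: "i \<in> {1..n}" using MV assms(5) by auto
  show ?thesis
  proof (intro conjI impI)
    assume c2: "card M = 2"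
    then obtain p q where pq: "M = {p, q}" "p \<noteq> q" by (auto simp: card_2_iff)
    then obtain j where j: "M = {i, j}" "i \<noteq> j" using assms(5) by auto
    have jV: "j \<in> {1..n}" using MV j by auto
    show "C_SDP_MC n \<subseteq> S_set n i M"
    proof
      fix p assume "p \<in> C_SDP_MC n"
      then obtain x Y where p: "p = (x, Y)" "(x, Y) \<in> C_SDP_MC n" by (cases p) auto
      show "p \<in> S_set n i M" unfolding p(1) j(1) by (rule part1[OF p(2) iV jV j(2)])
    qed
  next
    assume c3: "card M > 2"
    have "card (M - {i}) = card M - 1" using assms(5) finM by simp
    then have "card (M - {i}) > 0" using c3 by simp
    then obtain j where j: "j \<in> M" "j \<noteq> i" by (metis card_gt_0_iff Diff_iff ex_in_conv singletonI)
    have "card (M - {i} - {j}) = card (M - {i}) - 1" using j finM by simp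
    then have "card (M - {i} - {j}) > 0" using c3 \<open>card (M - {i}) = card M - 1\<close> by simp
    then obtain k where k: "k \<in> M" "k \<noteq> i" "k \<noteq> j" by (metis card_gt_0_iff Diff_iff ex_in_conv singletonI)
    show "\<not> (C_SDP_MC_Tri n \<subseteq> S_set n i M)"
      by (rule part2[of i n j k M]) (use MV j k assms(5) in auto)
  qed
qed

end
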